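(* Let $n\ge1$ and let $k_1\le k_2\le\cdots\le k_n$ be integers. Then $$\sum_{A} (-1)^{\#\{\text{special little triangles in }A\}+\#\{\text{entries of }A\text{ decorated with }\nwarrow\nearrow\}} \;=\; \sum_{G} 2^{r(G)},$$ where the left sum is over all arrowed Gelfand–Tsetlin patterns $A$ with bottom row $k_1,\ldots,k_n$, and the right sum is over all (undecorated) Gelfand–Tsetlin patterns $G$ with bottom row $k_1,\ldots,k_n$ such that no row other than the bottom row contains three equal entries; here $r(G)$ is the number of entries of $G$ that are not equal to both their $\nwarrow$-neighbor and their $\nearrow$-neighbor.
   Context: A Gelfand–Tsetlin pattern with $n$ rows is a triangular array of integers $(a_{i,j})_{1\le j\le i\le n}$, row $i$ being $a_{i,1},\ldots,a_{i,i}$, drawn so that $a_{i-1,j}$ sits between $a_{i,j}$ and $a_{i,j+1}$, satisfying $a_{i+1,j}\le a_{i,j}\le a_{i+1,j+1}$ for all $1\le j\le i<n$. Row $n$ is the bottom row. For an entry $a_{i,j}$: its $\nwarrow$-neighbor is $a_{i-1,j-1}$ and its $\nearrow$-neighbor is $a_{i-1,j}$ (when they exist; an entry lacking one of these neighbors is in particular not equal to both), its $\swarrow$-neighbor is $a_{i+1,j}$ and its $\searrow$-neighbor is $a_{i+1,j+1}$, and its left/right neighbors are $a_{i,j-1}$, $a_{i,j+1}$. An arrowed Gelfand–Tsetlin pattern is a Gelfand–Tsetlin pattern in which each entry either carries no decoration or carries exactly one decoration from $\{\nwarrow,\nearrow,\nwarrow\nearrow\}$ (the last one is called the double arrow), subject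 to: if an entry $a$ equals its $\nearrow$-neighbor and is decorated with $\nearrow$ or $\nwarrow\nearrow$, then the entry to the right of $a$ in the same row also equals $a$ and is decorated with $\nwarrow$ or $\nwarrow\nearrow$; and if $a$ equals its $\nwarrow$-neighbor and is decorated with $\nwarrow$ or $\nwarrow\nearrow$, then the entry to the left of $a$ in the same row also equals $a$ and is decorated with $\nearrow$ or $\nwarrow\nearrow$. A special little triangle is an entry $a$ that equals both its $\swarrow$-neighbor $b$ and its $\searrow$-neighbor $c$, where $b$ is decorated with $\nearrow$ or $\nwarrow\nearrow$ and $c$ is decorated with $\nwarrow$ or $\nwarrow\nearrow$. *)

theory Defs
  imports Main
begin

text \<open>A pattern is a function nat => nat => int; entries outside the triangle are
  normalised to 0 (and decorations to NoArrow) so each pattern has a unique representation.\<close>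

definition in_tri :: "nat \<Rightarrow> nat \<Rightarrow> nat \<Rightarrow> bool" where
  "in_tri n i j \<longleftrightarrow> 1 \<le> j \<and> j \<le> i \<and> i \<le> n"

definition is_GT :: "nat \<Rightarrow> (nat \<Rightarrow> nat \<Rightarrow> int) \<Rightarrow> bool" where
  "is_GT n a \<longleftrightarrow>
     (\<forall>i j. \<not> in_tri n i j \<longrightarrow> a i j = 0) \<and>
     (\<forall>i j. 1 \<le> j \<and> j \<le> i \<and> i < n \<longrightarrow> a (i+1) j \<le> a i j \<and> a i j \<le> a (i+1) (j+1))"

definition bottom_row :: "nat \<Rightarrow> (nat \<Rightarrow> int) \<Rightarrow> (nat \<Rightarrow> nat \<Rightarrow> int) \<Rightarrow> bool" where
  "bottom_row n k a \<longleftrightarrow> (\<forall>j. 1 \<le> j \<and> j \<le> n \<longrightarrow> a n j = k j)"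

datatype deco = NoArrow | NW | NE | NWNE

definition has_NE :: "deco \<Rightarrow> bool" where
  "has_NE d \<longleftrightarrow> d = NE \<or> d = NWNE"

definition has_NW :: "deco \<Rightarrow> bool" where
  "has_NW d \<longleftrightarrow> d = NW \<or> d = NWNE"

text \<open>NW-neighbour of (i,j) is (i-1,j-1), existing iff j >= 2;
  NE-neighbour of (i,j) is (i-1,j), existing iff j < i.\<close>

definition is_arrowed_GT :: "nat \<Rightarrow> (nat \<Rightarrow> nat \<Rightarrow> int) \<Rightarrow> (nat \<Rightarrow> nat \<Rightarrow> deco) \<Rightarrow> bool" where
  "is_arrowed_GT n a d \<longleftrightarrow> is_GT n a \<and>
     (\<forall>i j. \<not> in_tri n i j \<longrightarrow> d i j = NoArrow) \<and>
     (\<forall>i j. in_tri n i j \<and> j < i \<and> a i j = a (i-1) j \<and> has_NE (d i j) \<longrightarrow>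
             a i (j+1) = a i j \<and> has_NW (d i (j+1))) \<and>
     (\<forall>i j. in_tri n i j \<and> 2 \<le> j \<and> a i j = a (i-1) (j-1) \<and> has_NW (d i j) \<longrightarrow>
             a i (j-1) = a i j \<and> has_NE (d i (j-1)))"

definition special_triangles :: "nat \<Rightarrow> (nat \<Rightarrow> nat \<Rightarrow> int) \<Rightarrow> (nat \<Rightarrow> nat \<Rightarrow> deco) \<Rightarrow> (nat \<times> nat) set" where
  "special_triangles n a d = {(i,j). in_tri n i j \<and> i < n \<and>
      a i j = a (i+1) j \<and> a i j = a (i+1) (j+1) \<and>
      has_NE (d (i+1) j) \<and> has_NW (d (i+1) (j+1))}"

definition double_arrows :: "nat \<Rightarrow> (nat \<Rightarrow> nat \<Rightarrow> deco) \<Rightarrow> (nat \<times> nat) set" where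
  "double_arrows n d = {(i,j). in_tri n i j \<and> d i j = NWNE}"

definition no_three_equal_above_bottom :: "nat \<Rightarrow> (nat \<Rightarrow> nat \<Rightarrow> int) \<Rightarrow> bool" where
  "no_three_equal_above_bottom n a \<longleftrightarrow>
     (\<forall>i j1 j2 j3. i < n \<and> 1 \<le> j1 \<and> j1 < j2 \<and> j2 < j3 \<and> j3 \<le> i \<longrightarrow>
        \<not> (a i j1 = a i j2 \<and> a i j2 = a i j3))"

text \<open>Entries not equal to both their NW- and NE-neighbour (an entry lacking one of them counts).\<close>
definition r_entries :: "nat \<Rightarrow> (nat \<Rightarrow> nat \<Rightarrow> int) \<Rightarrow> (nat \<times> nat) set" where
  "r_entries n a = {(i,j). in_tri n i j \<and>
      \<not> (2 \<le> j \<and> j < i \<and> a i j = a (i-1) (j-1) \<and> a i j = a (i-1) j)}"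

end

theory Submission
  imports Defs
begin

lemma UNIV_deco: "(UNIV::deco set) = {NoArrow, NW, NE, NWNE}"
  using deco.exhaust by auto

lemma finite_UNIV_deco: "finite (UNIV::deco set)"
  by (simp add: UNIV_deco)

definition RowsF :: "nat \<Rightarrow> (nat \<Rightarrow> deco) set" where
  "RowsF m = {r. \<forall>j. (j \<in> {1..m} \<longrightarrow> r j \<in> UNIV) \<and> (j \<notin> {1..m} \<longrightarrow> r j = NoArrow)}"

lemma finite_RowsF: "finite (RowsF m)"
  unfolding RowsF_def by (rule finite_set_of_finite_funs) (auto simp: finite_UNIV_deco)

definition RW :: "(nat \<Rightarrow> deco \<Rightarrow> int) \<Rightarrow> (nat \<Rightarrow> deco \<Rightarrow> deco \<Rightarrow> int) \<Rightarrow> nat \<Rightarrow> (nat \<Rightarrow> deco) \<Rightarrow> int" where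
  "RW f g m r = (\<Prod>j\<in>{1..m}. f j (r j)) * (\<Prod>j\<in>{1..<m}. g j (r j) (r (j+1)))"

definition Bv :: "(nat \<Rightarrow> deco \<Rightarrow> int) \<Rightarrow> (nat \<Rightarrow> deco \<Rightarrow> deco \<Rightarrow> int) \<Rightarrow> nat \<Rightarrow> deco \<Rightarrow> int" where
  "Bv f g m y = (\<Sum>r\<in>{r\<in>RowsF m. r m = y}. RW f g m r)"

lemma RowsF_total:
  "(\<Sum>r\<in>RowsF m. RW f g m r) = (\<Sum>y\<in>UNIV. Bv f g m y)"
  unfolding Bv_def
  by (rule sum.group[symmetric]) (auto simp: finite_RowsF finite_UNIV_deco)

lemma Bv_one: "Bv f g 1 y = f 1 y"
proof -
  have "{r\<in>RowsF 1. r 1 = y} = {(\<lambda>j. NoArrow)(1 := y)}"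
    unfolding RowsF_def by (auto simp: fun_eq_iff)
  then show ?thesis by (simp add: Bv_def RW_def)
qed

lemma Bv_Suc:
  assumes "m \<ge> 1"
  shows "Bv f g (Suc m) y = (\<Sum>x\<in>UNIV. Bv f g m x * g m x y * f (Suc m) y)"
proof -
  let ?h = "\<lambda>r. r(Suc m := y)"
  have inj: "inj_on ?h (RowsF m)"
  proof (rule inj_onI)
    fix r s assume r: "r \<in> RowsF m" and s: "s \<in> RowsF m" and eq: "?h r = ?h s"
    show "r = s"
    proof
      fix j
      show "r j = s j"
      proof (cases "j = Suc m")
        case True then show ?thesis using r s unfolding RowsF_def by auto
      next
        case False then have "r j = ?h r j" "s j = ?h s j" by auto
        then show ?thesis using eq by simp
      qed
    qed
  qed
  have img: "{r\<in>RowsF (Suc m). r (Suc m) = y} = ?h ` RowsF m"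
  proof
    show "{r\<in>RowsF (Suc m). r (Suc m) = y} \<subseteq> ?h ` RowsF m"
    proof
      fix r assume r: "r \<in> {r\<in>RowsF (Suc m). r (Suc m) = y}"
      have "r(Suc m := NoArrow) \<in> RowsF m" using r unfolding RowsF_def by auto
      moreover have "r = ?h (r(Suc m := NoArrow))" using r by auto
      ultimately show "r \<in> ?h ` RowsF m" by blast
    qed
    show "?h ` RowsF m \<subseteq> {r\<in>RowsF (Suc m). r (Suc m) = y}"
      unfolding RowsF_def by auto
  qed
  have rw: "RW f g (Suc m) (?h r) = RW f g m r * g m (r m) y * f (Suc m) y" if "r \<in> RowsF m" for r
  proof -
    have p1: "(\<Prod>j\<in>{1..Suc m}. f j (?h r j)) = (\<Prod>j\<in>{1..m}. f j (r j)) * f (Suc m) y"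
      using assms by (simp add: prod.nat_ivl_Suc')
    have p2: "(\<Prod>j\<in>{1..<Suc m}. g j (?h r j) (?h r (j+1))) = (\<Prod>j\<in>{1..<m}. g j (r j) (r (j+1))) * g m (r m) y"
    proof -
      have "{1..<Suc m} = insert m {1..<m}" using assms by auto
      then have "(\<Prod>j\<in>{1..<Suc m}. g j (?h r j) (?h r (j+1))) = g m (r m) y * (\<Prod>j\<in>{1..<m}. g j (?h r j) (?h r (j+1)))"
        by simp
      also have "(\<Prod>j\<in>{1..<m}. g j (?h r j) (?h r (j+1))) = (\<Prod>j\<in>{1..<m}. g j (r j) (r (j+1)))"
        by (rule prod.cong) auto
      finally show ?thesis by simp
    qed
    show ?thesis unfolding RW_def p1 p2 by simp
  qed
  have "Bv f g (Suc m) y = (\<Sum>r\<in>RowsF m. RW f g (Suc m) (?h r))"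
    unfolding Bv_def img by (rule sum.reindex[OF inj, unfolded comp_def])
  also have "\<dots> = (\<Sum>r\<in>RowsF m. RW f g m r * g m (r m) y * f (Suc m) y)"
    by (rule sum.cong) (auto simp: rw)
  also have "\<dots> = (\<Sum>x\<in>UNIV. \<Sum>r\<in>{r\<in>RowsF m. r m = x}. RW f g m r * g m (r m) y * f (Suc m) y)"
    by (rule sum.group[symmetric]) (auto simp: finite_RowsF finite_UNIV_deco)
  also have "\<dots> = (\<Sum>x\<in>UNIV. Bv f g m x * g m x y * f (Suc m) y)"
    unfolding Bv_def by (rule sum.cong) (auto simp: sum_distrib_right intro!: sum.cong)
  finally show ?thesis .
qed


definition sitef :: "(nat\<Rightarrow>bool) \<Rightarrow> (nat\<Rightarrow>bool) \<Rightarrow> (nat\<Rightarrow>bool) \<Rightarrow> nat \<Rightarrow> deco \<Rightarrow> int" where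
  "sitef L R T j x = (if \<not>(R j \<and> \<not>T j \<and> has_NE x) \<and> \<not>(L j \<and> \<not>T (j-1) \<and> has_NW x)
     then (if x = NWNE then -1 else 1) else 0)"

definition linkg :: "(nat\<Rightarrow>bool) \<Rightarrow> nat \<Rightarrow> deco \<Rightarrow> deco \<Rightarrow> int" where
  "linkg T j x y = (if T j then (if has_NE x = has_NW y then (if has_NE x \<and> has_NW y then -1 else 1) else 0) else 1)"

definition AF where "AF L R T j = Bv (sitef L R T) (linkg T) j NoArrow + Bv (sitef L R T) (linkg T) j NW"
definition AT where "AT L R T j = Bv (sitef L R T) (linkg T) j NE + Bv (sitef L R T) (linkg T) j NWNE"

lemma tot_eq: "(\<Sum>y\<in>UNIV. Bv (sitef L R T) (linkg T) j y) = AF L R T j + AT L R T j"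
  by (simp add: UNIV_deco AF_def AT_def)

lemma step_nT:
  assumes "1 \<le> j" "\<not> T j"
  shows "AF L R T (Suc j) = (AF L R T j + AT L R T j) * (if L (Suc j) then 1 else 2)
       \<and> AT L R T (Suc j) = (AF L R T j + AT L R T j) * (if L (Suc j) \<and> \<not>(R (Suc j) \<and> \<not> T (Suc j)) then 1 else 0)"
  using assms
  by (auto simp add: AF_def AT_def Bv_Suc UNIV_deco sitef_def linkg_def has_NE_def has_NW_def algebra_simps)

lemma step_T:
  assumes "1 \<le> j" "T j"
  shows "AF L R T (Suc j) = AF L R T j - AT L R T j
       \<and> AT L R T (Suc j) = (if R (Suc j) \<and> \<not> T (Suc j) then 0 else AF L R T j + AT L R T j)"
  using assms
  by (auto simp add: AF_def AT_def Bv_Suc UNIV_deco sitef_def linkg_def has_NE_def has_NW_def algebra_simps)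

lemma step_one:
  assumes "\<not> L 1"
  shows "AF L R T 1 = 2 \<and> AT L R T 1 = 0"
  unfolding AF_def AT_def Bv_one using assms
  by (simp add: sitef_def has_NE_def has_NW_def)


lemma good_row:
  assumes L1: "\<not> L 1" and TRL: "\<And>j. 1 \<le> j \<Longrightarrow> T j \<Longrightarrow> R j \<and> L (Suc j)" and Tm: "\<And>j. T j \<Longrightarrow> j < m"
    and H1: "\<And>j. \<not> (L j \<and> T j \<and> R (Suc j))" and m: "m \<ge> 1"
  shows "AF L R T m + AT L R T m = (\<Prod>t\<in>{1..m}. if L t \<and> R t then 1 else 2)"
proof -
  define P where "P j = (\<Prod>t\<in>{1..j}. if L t \<and> R t then 1 else 2 :: int)" for j
  have PS: "P (Suc j) = P j * (if L (Suc j) \<and> R (Suc j) then 1 else 2)" for j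
    unfolding P_def by (simp add: prod.nat_ivl_Suc' mult.commute)
  have P1: "P 1 = 2" unfolding P_def using L1 by simp
  have inv: "(\<not>T j \<longrightarrow> AF L R T j + AT L R T j = P j) \<and> (T j \<and> \<not>L j \<longrightarrow> AF L R T j = P j \<and> AT L R T j = 0)
     \<and> (T j \<and> L j \<longrightarrow> AF L R T j = P j \<and> AT L R T j = P j)" if "1 \<le> j" for j
    using that
  proof (induction j rule: nat_induct_at_least)
    case base
    then show ?case using step_one[of L R T, OF L1] P1 L1 by simp
  next
    case (Suc j)
    note IH = Suc.IH
    have TS: "T (Suc j) \<Longrightarrow> R (Suc j) \<and> L (Suc (Suc j))" using TRL[of "Suc j"] by simp
    show ?case
    proof (cases "T j")
      case False
      with step_nT[where L=L and R=R and T=T, OF Suc.hyps False] IH show ?thesis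
        using TS by (auto simp: PS)
    next
      case True
      have LS: "L (Suc j)" using TRL[OF Suc.hyps True] by blast
      show ?thesis
      proof (cases "L j")
        case False
        with step_T[where L=L and R=R and T=T, OF Suc.hyps True] IH True show ?thesis
          using TS LS by (auto simp: PS)
      next
        case Lj: True
        have "\<not> R (Suc j)" using H1[of j] Lj True by blast
        then have "\<not> T (Suc j)" using TS by blast
        with step_T[where L=L and R=R and T=T, OF Suc.hyps True] IH True Lj LS \<open>\<not> R (Suc j)\<close> show ?thesis
          by (auto simp: PS)
      qed
    qed
  qed
  have "\<not> T m" using Tm by blast
  then show ?thesis using inv[OF m] unfolding P_def by simp
qed

lemma noL_AT:
  assumes L1: "\<not> L 1" and TRL: "\<And>j. 1 \<le> j \<Longrightarrow> T j \<Longrightarrow> R j \<and> L (Suc j)"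
  shows "1 \<le> j \<Longrightarrow> \<not> L j \<Longrightarrow> AT L R T j = 0"
proof (induction j rule: nat_induct_at_least)
  case base
  then show ?case using step_one[of L R T, OF L1] by simp
next
  case (Suc j)
  have "\<not> T j" using TRL[OF Suc.hyps] Suc.prems by blast
  then show ?case using step_nT[where L=L and R=R and T=T, OF Suc.hyps \<open>\<not> T j\<close>] Suc.prems by simp
qed

lemma zero_prop:
  assumes "1 \<le> j" "AF L R T j = 0" "AT L R T j = 0"
  shows "j \<le> j' \<Longrightarrow> AF L R T j' = 0 \<and> AT L R T j' = 0"
proof (induction j' rule: dec_induct)
  case base
  then show ?case using assms by simp
next
  case (step i)
  have "1 \<le> i" using assms step by simp
  show ?case
  proof (cases "T i")
    case True
    then show ?thesis using step_T[where L=L and R=R and T=T, OF \<open>1 \<le> i\<close> True] step.IH by simp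
  next
    case False
    then show ?thesis using step_nT[where L=L and R=R and T=T, OF \<open>1 \<le> i\<close> False] step.IH by simp
  qed
qed

lemma bad_row:
  assumes L1: "\<not> L 1" and TRL: "\<And>j. 1 \<le> j \<Longrightarrow> T j \<Longrightarrow> R j \<and> L (Suc j)" and Tm: "\<And>j. T j \<Longrightarrow> j < m"
    and p: "p \<ge> 1" and LSp: "L (Suc p)" and TSp: "T (Suc p)" and R2: "R (p+2)"
    and Tp: "T p \<Longrightarrow> \<not> L p" and T2: "T (p+2) \<Longrightarrow> \<not> R (p+3)"
  shows "AF L R T m + AT L R T m = 0"
proof -
  have pm: "Suc p < m" using Tm[OF TSp] .
  obtain Y where Y: "AF L R T (Suc p) = Y" "AT L R T (Suc p) = Y"
  proof (cases "T p")
    case True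
    have "AT L R T p = 0" using noL_AT[of L T R p, OF L1 TRL p Tp[OF True]] by blast
    then have "AF L R T (Suc p) = AF L R T p \<and> AT L R T (Suc p) = AF L R T p"
      using step_T[where L=L and R=R and T=T, OF p True] TSp by simp
    then show ?thesis using that by blast
  next
    case False
    then have "AF L R T (Suc p) = AF L R T p + AT L R T p \<and> AT L R T (Suc p) = AF L R T p + AT L R T p"
      using step_nT[where L=L and R=R and T=T, OF p False] TSp LSp by simp
    then show ?thesis using that by blast
  qed
  have s2: "AF L R T (Suc (Suc p)) = 0 \<and> AT L R T (Suc (Suc p)) = (if R (Suc (Suc p)) \<and> \<not> T (Suc (Suc p)) then 0 else 2*Y)"
    using step_T[of "Suc p" T L R] TSp Y by simp
  show ?thesis
  proof (cases "T (p+2)")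
    case False
    then have "AF L R T (Suc (Suc p)) = 0 \<and> AT L R T (Suc (Suc p)) = 0" using s2 R2 by simp
    then have "AF L R T m = 0 \<and> AT L R T m = 0"
      using zero_prop[of "Suc (Suc p)" L R T m] pm by simp
    then show ?thesis by simp
  next
    case True
    have nR3: "\<not> R (p+3)" using T2 True by blast
    have nT3: "\<not> T (p+3)" using TRL[of "p+3"] nR3 by auto
    have pm3: "p + 3 \<le> m" using Tm[OF True] by simp
    have s3: "AF L R T (Suc (Suc (Suc p))) + AT L R T (Suc (Suc (Suc p))) = 0"
      using step_T[of "Suc (Suc p)" T L R] True s2 nR3 by (simp add: numeral_3_eq_3)
    show ?thesis
    proof (cases "p + 3 = m")
      case True
      then show ?thesis using s3 by (simp add: numeral_3_eq_3)
    next
      case False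
      have "AF L R T (Suc (Suc (Suc (Suc p)))) = 0 \<and> AT L R T (Suc (Suc (Suc (Suc p)))) = 0"
        using step_nT[of "Suc (Suc (Suc p))" T L R] nT3 s3 by (simp add: numeral_3_eq_3)
      then have "AF L R T m = 0 \<and> AT L R T m = 0"
        using zero_prop[of "Suc (Suc (Suc (Suc p)))" L R T m] pm3 False by simp
      then show ?thesis by simp
    qed
  qed
qed


definition AllD :: "nat \<Rightarrow> (nat \<Rightarrow> nat \<Rightarrow> deco) set" where
  "AllD n = {d. \<forall>i j. \<not> in_tri n i j \<longrightarrow> d i j = NoArrow}"

lemma AllD_0: "AllD 0 = {\<lambda>_ _. NoArrow}"
  unfolding AllD_def in_tri_def by (auto simp: fun_eq_iff)

lemma AllD_Suc_img: "AllD (Suc n) = (\<lambda>(d,r). d(Suc n := r)) ` (AllD n \<times> RowsF (Suc n))"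
proof
  show "AllD (Suc n) \<subseteq> (\<lambda>(d,r). d(Suc n := r)) ` (AllD n \<times> RowsF (Suc n))"
  proof
    fix x assume x: "x \<in> AllD (Suc n)"
    have "x(Suc n := (\<lambda>_. NoArrow)) \<in> AllD n"
      using x unfolding AllD_def in_tri_def by auto
    moreover have "x (Suc n) \<in> RowsF (Suc n)"
      using x unfolding AllD_def in_tri_def RowsF_def by auto
    moreover have "x = (\<lambda>(d,r). d(Suc n := r)) (x(Suc n := (\<lambda>_. NoArrow)), x (Suc n))" by simp
    ultimately show "x \<in> (\<lambda>(d,r). d(Suc n := r)) ` (AllD n \<times> RowsF (Suc n))" by blast
  qed
  show "(\<lambda>(d,r). d(Suc n := r)) ` (AllD n \<times> RowsF (Suc n)) \<subseteq> AllD (Suc n)"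
    unfolding AllD_def in_tri_def RowsF_def by auto
qed

lemma AllD_Suc_inj: "inj_on (\<lambda>(d,r). d(Suc n := r)) (AllD n \<times> RowsF (Suc n))"
proof (rule inj_onI, clarify)
  fix d r d' r'
  assume d: "d \<in> AllD n" and d': "d' \<in> AllD n" and eq: "d(Suc n := r) = d'(Suc n := r')"
  have "r = r'" using fun_cong[OF eq, of "Suc n"] by simp
  moreover have "d = d'"
  proof
    fix i show "d i = d' i"
    proof (cases "i = Suc n")
      case True then show ?thesis using d d' unfolding AllD_def in_tri_def by auto
    next
      case False then show ?thesis using fun_cong[OF eq, of i] by simp
    qed
  qed
  ultimately show "d = d' \<and> r = r'" by simp
qed

lemma finite_AllD: "finite (AllD n)"
proof (induction n)
  case 0 then show ?case by (simp add: AllD_0)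
next
  case (Suc n) then show ?case by (simp add: AllD_Suc_img finite_RowsF)
qed

lemma factor_rows:
  "(\<Sum>d\<in>AllD n. \<Prod>i\<in>{1..n}. (Phi i (d i) :: int)) = (\<Prod>i\<in>{1..n}. \<Sum>r\<in>RowsF i. Phi i r)"
proof (induction n)
  case 0 then show ?case by (simp add: AllD_0)
next
  case (Suc n)
  have "(\<Sum>d\<in>AllD (Suc n). \<Prod>i\<in>{1..Suc n}. Phi i (d i))
      = (\<Sum>x\<in>AllD n \<times> RowsF (Suc n). \<Prod>i\<in>{1..Suc n}. Phi i (((\<lambda>(d,r). d(Suc n := r)) x) i))"
    unfolding AllD_Suc_img by (rule sum.reindex[OF AllD_Suc_inj, unfolded comp_def])
  also have "\<dots> = (\<Sum>x\<in>AllD n \<times> RowsF (Suc n). (\<Prod>i\<in>{1..n}. Phi i (fst x i)) * Phi (Suc n) (snd x))"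
  proof (rule sum.cong[OF refl])
    fix x assume "x \<in> AllD n \<times> RowsF (Suc n)"
    obtain d r where x: "x = (d, r)" by (cases x)
    have "(\<Prod>i\<in>{1..n}. Phi i ((d(Suc n := r)) i)) = (\<Prod>i\<in>{1..n}. Phi i (d i))"
      by (rule prod.cong) auto
    then show "(\<Prod>i\<in>{1..Suc n}. Phi i (((\<lambda>(d,r). d(Suc n := r)) x) i)) = (\<Prod>i\<in>{1..n}. Phi i (fst x i)) * Phi (Suc n) (snd x)"
      by (simp add: x prod.nat_ivl_Suc')
  qed
  also have "\<dots> = (\<Sum>d\<in>AllD n. \<Prod>i\<in>{1..n}. Phi i (d i)) * (\<Sum>r\<in>RowsF (Suc n). Phi (Suc n) r)"
    by (simp add: sum_product sum.cartesian_product split_beta)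
  also have "\<dots> = (\<Prod>i\<in>{1..Suc n}. \<Sum>r\<in>RowsF i. Phi i r)"
    using Suc.IH by (simp add: prod.nat_ivl_Suc')
  finally show ?case .
qed


definition Lc :: "(nat \<Rightarrow> nat \<Rightarrow> int) \<Rightarrow> nat \<Rightarrow> nat \<Rightarrow> bool" where
  "Lc a i j = (2 \<le> j \<and> a i j = a (i-1) (j-1))"
definition Rc :: "(nat \<Rightarrow> nat \<Rightarrow> int) \<Rightarrow> nat \<Rightarrow> nat \<Rightarrow> bool" where
  "Rc a i j = (j < i \<and> a i j = a (i-1) j)"
definition Tc :: "(nat \<Rightarrow> nat \<Rightarrow> int) \<Rightarrow> nat \<Rightarrow> nat \<Rightarrow> bool" where
  "Tc a i j = (j < i \<and> a i j = a (i-1) j \<and> a i (j+1) = a i j)"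
definition Phi :: "(nat \<Rightarrow> nat \<Rightarrow> int) \<Rightarrow> nat \<Rightarrow> (nat \<Rightarrow> deco) \<Rightarrow> int" where
  "Phi a i r = RW (sitef (Lc a i) (Rc a i) (Tc a i)) (linkg (Tc a i)) i r"

lemma prod_if_zero: "finite A \<Longrightarrow> (\<Prod>x\<in>A. if P x then g x else (0::int)) = (if (\<forall>x\<in>A. P x) then (\<Prod>x\<in>A. g x) else 0)"
  by (induction A rule: finite_induct) auto

lemma prod_pm: "finite U \<Longrightarrow> (\<Prod>c\<in>U. if c \<in> S then (x::int) else 1) = x ^ card (U \<inter> S)"
  using prod.inter_restrict[of U "\<lambda>_. x" S] by simp

definition okf :: "(nat \<Rightarrow> nat \<Rightarrow> int) \<Rightarrow> nat \<Rightarrow> nat \<Rightarrow> deco \<Rightarrow> bool" where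
  "okf a i j x = (\<not>(Rc a i j \<and> \<not>Tc a i j \<and> has_NE x) \<and> \<not>(Lc a i j \<and> \<not>Tc a i (j-1) \<and> has_NW x))"
definition okg :: "(nat \<Rightarrow> nat \<Rightarrow> int) \<Rightarrow> nat \<Rightarrow> nat \<Rightarrow> deco \<Rightarrow> deco \<Rightarrow> bool" where
  "okg a i j x y = (Tc a i j \<longrightarrow> has_NE x = has_NW y)"

lemma sitef_eq: "sitef (Lc a i) (Rc a i) (Tc a i) j x = (if okf a i j x then (if x = NWNE then -1 else 1) else 0)"
  unfolding sitef_def okf_def by simp

lemma linkg_eq: "linkg (Tc a i) j x y = (if okg a i j x y then (if Tc a i j \<and> has_NE x \<and> has_NW y then -1 else 1) else 0)"
  unfolding linkg_def okg_def by auto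

lemma cells_prod:
  "(\<Prod>i\<in>{1..(n::nat)}. \<Prod>j\<in>(B i). F i j) = (\<Prod>c\<in>(SIGMA i:{1..n}. B i). F (fst c) (snd c))" if "\<And>i. finite (B i)"
  using that by (subst prod.Sigma) (auto simp: split_beta)

lemma db_count:
  "(\<Prod>i\<in>{1..n}. \<Prod>j\<in>{1..i}. if d i j = NWNE then -1 else 1) = (-1::int) ^ card (double_arrows n d)"
proof -
  let ?U = "SIGMA i:{1..n}. {1..i}"
  have "(\<Prod>i\<in>{1..n}. \<Prod>j\<in>{1..i}. if d i j = NWNE then -1 else 1)
     = (\<Prod>c\<in>?U. if d (fst c) (snd c) = NWNE then -1 else (1::int))"
    by (rule cells_prod) simp
  also have "\<dots> = (\<Prod>c\<in>?U. if c \<in> double_arrows n d then -1 else (1::int))"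
    by (rule prod.cong) (auto simp: double_arrows_def in_tri_def)
  also have "\<dots> = (-1) ^ card (?U \<inter> double_arrows n d)"
    by (rule prod_pm) auto
  also have "?U \<inter> double_arrows n d = double_arrows n d"
    by (auto simp: double_arrows_def in_tri_def)
  finally show ?thesis .
qed

lemma st_count:
  "(\<Prod>i\<in>{1..n}. \<Prod>j\<in>{1..<i}. if Tc a i j \<and> has_NE (d i j) \<and> has_NW (d i (j+1)) then -1 else 1)
     = (-1::int) ^ card (special_triangles n a d)"
proof -
  let ?U = "SIGMA i:{1..n}. {1..<i}"
  let ?S = "{c. Tc a (fst c) (snd c) \<and> has_NE (d (fst c) (snd c)) \<and> has_NW (d (fst c) (snd c + 1))}"
  have "(\<Prod>i\<in>{1..n}. \<Prod>j\<in>{1..<i}. if Tc a i j \<and> has_NE (d i j) \<and> has_NW (d i (j+1)) then -1 else 1)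
     = (\<Prod>c\<in>?U. if Tc a (fst c) (snd c) \<and> has_NE (d (fst c) (snd c)) \<and> has_NW (d (fst c) (snd c + 1)) then -1 else (1::int))"
    by (rule cells_prod) simp
  also have "\<dots> = (\<Prod>c\<in>?U. if c \<in> ?S then -1 else (1::int))"
    by (rule prod.cong) auto
  also have "\<dots> = (-1) ^ card (?U \<inter> ?S)"
    by (rule prod_pm) auto
  also have "?U \<inter> ?S = (\<lambda>(i,j). (Suc i, j)) ` special_triangles n a d"
  proof
    show "?U \<inter> ?S \<subseteq> (\<lambda>(i,j). (Suc i, j)) ` special_triangles n a d"
    proof (rule subsetI)
      fix c assume c: "c \<in> ?U \<inter> ?S"
      obtain i j where cij: "c = (i, j)" by (cases c)
      from c have h: "1 \<le> i" "i \<le> n" "1 \<le> j" "j < i" "Tc a i j" "has_NE (d i j)" "has_NW (d i (j+1))" unfolding cij by auto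
      then have "(i - 1, j) \<in> special_triangles n a d"
        unfolding special_triangles_def in_tri_def Tc_def by auto
      moreover have "(i, j) = (\<lambda>(i,j). (Suc i, j)) (i - 1, j)" using h by simp
      ultimately show "c \<in> (\<lambda>(i,j). (Suc i, j)) ` special_triangles n a d" unfolding cij by blast
    qed
    show "(\<lambda>(i,j). (Suc i, j)) ` special_triangles n a d \<subseteq> ?U \<inter> ?S"
      unfolding special_triangles_def in_tri_def Tc_def by auto
  qed
  also have "card \<dots> = card (special_triangles n a d)"
    by (rule card_image) (auto simp: inj_on_def)
  finally show ?thesis .
qed

lemma weight_prod:
  "(\<Prod>i\<in>{1..n}. Phi a i (d i)) =
     (if (\<forall>i\<in>{1..n}. \<forall>j\<in>{1..i}. okf a i j (d i j)) \<and> (\<forall>i\<in>{1..n}. \<forall>j\<in>{1..<i}. okg a i j (d i j) (d i (j+1)))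
      then (-1)^(card (special_triangles n a d) + card (double_arrows n d)) else 0)"
proof -
  have "(\<Prod>i\<in>{1..n}. Phi a i (d i)) =
     (\<Prod>i\<in>{1..n}. \<Prod>j\<in>{1..i}. sitef (Lc a i) (Rc a i) (Tc a i) j (d i j)) *
     (\<Prod>i\<in>{1..n}. \<Prod>j\<in>{1..<i}. linkg (Tc a i) j (d i j) (d i (j+1)))"
    unfolding Phi_def RW_def prod.distrib ..
  also have "(\<Prod>i\<in>{1..n}. \<Prod>j\<in>{1..i}. sitef (Lc a i) (Rc a i) (Tc a i) j (d i j))
     = (\<Prod>i\<in>{1..n}. if (\<forall>j\<in>{1..i}. okf a i j (d i j)) then (\<Prod>j\<in>{1..i}. if d i j = NWNE then -1 else 1) else 0)"
    by (rule prod.cong[OF refl]) (simp add: sitef_eq prod_if_zero)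
  also have "\<dots> = (if (\<forall>i\<in>{1..n}. \<forall>j\<in>{1..i}. okf a i j (d i j)) then (\<Prod>i\<in>{1..n}. \<Prod>j\<in>{1..i}. if d i j = NWNE then -1 else 1) else 0)"
    by (rule prod_if_zero) simp
  also note db_count
  also have "(\<Prod>i\<in>{1..n}. \<Prod>j\<in>{1..<i}. linkg (Tc a i) j (d i j) (d i (j+1)))
     = (\<Prod>i\<in>{1..n}. if (\<forall>j\<in>{1..<i}. okg a i j (d i j) (d i (j+1))) then
         (\<Prod>j\<in>{1..<i}. if Tc a i j \<and> has_NE (d i j) \<and> has_NW (d i (j+1)) then -1 else 1) else 0)"
    by (rule prod.cong[OF refl]) (simp add: linkg_eq prod_if_zero)
  also have "\<dots> = (if (\<forall>i\<in>{1..n}. \<forall>j\<in>{1..<i}. okg a i j (d i j) (d i (j+1))) then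
         (\<Prod>i\<in>{1..n}. \<Prod>j\<in>{1..<i}. if Tc a i j \<and> has_NE (d i j) \<and> has_NW (d i (j+1)) then -1 else 1) else 0)"
    by (rule prod_if_zero) simp
  also note st_count
  finally show ?thesis by (simp add: power_add mult.commute)
qed


lemma ok_imp_arrowed:
  assumes GT: "is_GT n a" and d: "d \<in> AllD n"
    and OKF: "\<forall>i\<in>{1..n}. \<forall>j\<in>{1..i}. okf a i j (d i j)"
    and OKG: "\<forall>i\<in>{1..n}. \<forall>j\<in>{1..<i}. okg a i j (d i j) (d i (j+1))"
  shows "is_arrowed_GT n a d"
proof -
  have c0: "\<forall>i j. \<not> in_tri n i j \<longrightarrow> d i j = NoArrow" using d unfolding AllD_def by auto
  have c1: "a i (j + 1) = a i j \<and> has_NW (d i (j + 1))"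
    if h: "in_tri n i j \<and> j < i \<and> a i j = a (i - 1) j \<and> has_NE (d i j)" for i j
  proof -
    from h have ij: "i \<in> {1..n}" "j \<in> {1..i}" "j \<in> {1..<i}" by (auto simp: in_tri_def)
    have "Rc a i j" using h by (simp add: Rc_def)
    then have T: "Tc a i j" using OKF ij h unfolding okf_def by blast
    then have "has_NW (d i (j+1))" using OKG ij h unfolding okg_def by blast
    then show ?thesis using T by (simp add: Tc_def)
  qed
  have c2: "a i (j - 1) = a i j \<and> has_NE (d i (j - 1))"
    if h: "in_tri n i j \<and> 2 \<le> j \<and> a i j = a (i - 1) (j - 1) \<and> has_NW (d i j)" for i j
  proof -
    from h have ij: "i \<in> {1..n}" "j \<in> {1..i}" "j - 1 \<in> {1..<i}" by (auto simp: in_tri_def)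
    have "Lc a i j" using h by (simp add: Lc_def)
    then have T: "Tc a i (j-1)" using OKF ij h unfolding okf_def by blast
    have jj: "j - 1 + 1 = j" using h by simp
    have "okg a i (j-1) (d i (j-1)) (d i j)" using OKG ij jj by metis
    then have "has_NE (d i (j-1))" using T h unfolding okg_def by simp
    moreover have "a i (j - 1) = a i j" using T jj unfolding Tc_def by simp
    ultimately show ?thesis by simp
  qed
  show ?thesis unfolding is_arrowed_GT_def using GT c0 c1 c2 by blast
qed

lemma arrowed_imp_okf:
  assumes A: "is_arrowed_GT n a d" and ij: "i \<in> {1..n}" "j \<in> {1..i}"
  shows "okf a i j (d i j)"
proof -
  have C1: "\<And>i j. in_tri n i j \<and> j < i \<and> a i j = a (i-1) j \<and> has_NE (d i j) \<Longrightarrow>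
             a i (j+1) = a i j \<and> has_NW (d i (j+1))"
    using A unfolding is_arrowed_GT_def by blast
  have C2: "\<And>i j. in_tri n i j \<and> 2 \<le> j \<and> a i j = a (i-1) (j-1) \<and> has_NW (d i j) \<Longrightarrow>
             a i (j-1) = a i j \<and> has_NE (d i (j-1))"
    using A unfolding is_arrowed_GT_def by blast
  have tri: "in_tri n i j" using ij by (auto simp: in_tri_def)
  have p1: "\<not>(Rc a i j \<and> \<not>Tc a i j \<and> has_NE (d i j))"
  proof
    assume "Rc a i j \<and> \<not>Tc a i j \<and> has_NE (d i j)"
    then show False using C1[of i j] tri unfolding Rc_def Tc_def by auto
  qed
  have p2: "\<not>(Lc a i j \<and> \<not>Tc a i (j-1) \<and> has_NW (d i j))"
  proof
    assume h: "Lc a i j \<and> \<not>Tc a i (j-1) \<and> has_NW (d i j)"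
    then have "a i (j-1) = a i j" using C2[of i j] tri unfolding Lc_def by auto
    moreover have "j - 1 + 1 = j" "j - 1 < i" using h ij unfolding Lc_def by auto
    ultimately have "Tc a i (j-1)" using h unfolding Lc_def Tc_def by auto
    then show False using h by blast
  qed
  show ?thesis using p1 p2 unfolding okf_def by blast
qed

lemma arrowed_imp_okg:
  assumes A: "is_arrowed_GT n a d" and ij: "i \<in> {1..n}" "j \<in> {1..<i}"
  shows "okg a i j (d i j) (d i (j+1))"
proof -
  have C1: "\<And>i j. in_tri n i j \<and> j < i \<and> a i j = a (i-1) j \<and> has_NE (d i j) \<Longrightarrow>
             a i (j+1) = a i j \<and> has_NW (d i (j+1))"
    using A unfolding is_arrowed_GT_def by blast
  have C2: "\<And>i j. in_tri n i j \<and> 2 \<le> j \<and> a i j = a (i-1) (j-1) \<and> has_NW (d i j) \<Longrightarrow>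
             a i (j-1) = a i j \<and> has_NE (d i (j-1))"
    using A unfolding is_arrowed_GT_def by blast
  have tri: "in_tri n i j" "in_tri n i (j+1)" using ij by (auto simp: in_tri_def)
  show ?thesis unfolding okg_def
  proof
    assume T: "Tc a i j"
    show "has_NE (d i j) = has_NW (d i (j + 1))"
    proof
      assume "has_NE (d i j)" then show "has_NW (d i (j + 1))" using C1[of i j] T tri unfolding Tc_def by blast
    next
      assume "has_NW (d i (j + 1))"
      then show "has_NE (d i j)" using C2[of i "j+1"] T tri ij unfolding Tc_def by auto
    qed
  qed
qed

lemma pattern_sum:
  assumes GT: "is_GT n a"
  shows "(\<Sum>d\<in>{d. is_arrowed_GT n a d}. (-1::int) ^ (card (special_triangles n a d) + card (double_arrows n d)))
       = (\<Prod>i\<in>{1..n}. AF (Lc a i) (Rc a i) (Tc a i) i + AT (Lc a i) (Rc a i) (Tc a i) i)"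
proof -
  have sub: "{d. is_arrowed_GT n a d} = {d\<in>AllD n. is_arrowed_GT n a d}"
    unfolding AllD_def is_arrowed_GT_def by auto
  have "(\<Sum>d\<in>{d. is_arrowed_GT n a d}. (-1::int) ^ (card (special_triangles n a d) + card (double_arrows n d)))
     = (\<Sum>d\<in>AllD n. if is_arrowed_GT n a d then (-1::int) ^ (card (special_triangles n a d) + card (double_arrows n d)) else 0)"
    unfolding sub by (rule sum.inter_filter[OF finite_AllD])
  also have "\<dots> = (\<Sum>d\<in>AllD n. \<Prod>i\<in>{1..n}. Phi a i (d i))"
  proof (rule sum.cong[OF refl])
    fix d assume d: "d \<in> AllD n"
    have "((\<forall>i\<in>{1..n}. \<forall>j\<in>{1..i}. okf a i j (d i j)) \<and> (\<forall>i\<in>{1..n}. \<forall>j\<in>{1..<i}. okg a i j (d i j) (d i (j+1))))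
          = is_arrowed_GT n a d"
      using ok_imp_arrowed[OF GT d] arrowed_imp_okf arrowed_imp_okg by blast
    then show "(if is_arrowed_GT n a d then (-1::int) ^ (card (special_triangles n a d) + card (double_arrows n d)) else 0)
        = (\<Prod>i\<in>{1..n}. Phi a i (d i))"
      by (simp only: weight_prod)
  qed
  also have "\<dots> = (\<Prod>i\<in>{1..n}. \<Sum>r\<in>RowsF i. Phi a i r)"
    by (rule factor_rows)
  also have "\<dots> = (\<Prod>i\<in>{1..n}. AF (Lc a i) (Rc a i) (Tc a i) i + AT (Lc a i) (Rc a i) (Tc a i) i)"
    unfolding Phi_def RowsF_total tot_eq ..
  finally show ?thesis .
qed


lemma TRL_c: "1 \<le> j \<Longrightarrow> Tc a i j \<Longrightarrow> Rc a i j \<and> Lc a i (Suc j)"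
  unfolding Tc_def Rc_def Lc_def by auto

lemma Tm_c: "Tc a i j \<Longrightarrow> j < i"
  unfolding Tc_def by auto

lemma L1_c: "\<not> Lc a i 1"
  unfolding Lc_def by auto

lemma good_pattern:
  assumes GT: "is_GT n a" and good: "no_three_equal_above_bottom n a"
  shows "(\<Prod>i\<in>{1..n}. AF (Lc a i) (Rc a i) (Tc a i) i + AT (Lc a i) (Rc a i) (Tc a i) i)
       = 2 ^ card (r_entries n a)"
proof -
  have row: "AF (Lc a i) (Rc a i) (Tc a i) i + AT (Lc a i) (Rc a i) (Tc a i) i
        = (\<Prod>t\<in>{1..i}. if Lc a i t \<and> Rc a i t then 1 else 2)" if i: "i \<in> {1..n}" for i
  proof (rule good_row)
    show "\<not> Lc a i 1" by (rule L1_c)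
    show "\<And>j. 1 \<le> j \<Longrightarrow> Tc a i j \<Longrightarrow> Rc a i j \<and> Lc a i (Suc j)" by (rule TRL_c)
    show "\<And>j. Tc a i j \<Longrightarrow> j < i" by (rule Tm_c)
    show "i \<ge> 1" using i by simp
    show "\<not> (Lc a i j \<and> Tc a i j \<and> Rc a i (Suc j))" for j
    proof
      assume h: "Lc a i j \<and> Tc a i j \<and> Rc a i (Suc j)"
      then have "a (i-1) (j-1) = a (i-1) j \<and> a (i-1) j = a (i-1) (j+1)" "2 \<le> j" "Suc j < i"
        unfolding Lc_def Tc_def Rc_def by auto
      moreover have "i - 1 < n" using i by auto
      ultimately show False
        using good[unfolded no_three_equal_above_bottom_def, rule_format, of "i-1" "j-1" j "j+1"]
        by linarith
    qed
  qed
  let ?U = "SIGMA i:{1..n}. {1..i}"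
  have "(\<Prod>i\<in>{1..n}. AF (Lc a i) (Rc a i) (Tc a i) i + AT (Lc a i) (Rc a i) (Tc a i) i)
      = (\<Prod>i\<in>{1..n}. \<Prod>t\<in>{1..i}. if Lc a i t \<and> Rc a i t then 1 else (2::int))"
    by (rule prod.cong[OF refl]) (rule row)
  also have "\<dots> = (\<Prod>c\<in>?U. if Lc a (fst c) (snd c) \<and> Rc a (fst c) (snd c) then 1 else (2::int))"
    by (rule cells_prod) simp
  also have "\<dots> = (\<Prod>c\<in>?U. if c \<in> r_entries n a then 2 else (1::int))"
    by (rule prod.cong) (auto simp: r_entries_def in_tri_def Lc_def Rc_def)
  also have "\<dots> = 2 ^ card (?U \<inter> r_entries n a)"
    by (rule prod_pm) auto
  also have "?U \<inter> r_entries n a = r_entries n a"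
    by (auto simp: r_entries_def in_tri_def)
  finally show ?thesis .
qed


lemma GT_le: "is_GT n a \<Longrightarrow> 1 \<le> j \<Longrightarrow> j \<le> i \<Longrightarrow> i < n \<Longrightarrow> a (i+1) j \<le> a i j \<and> a i j \<le> a (i+1) (j+1)"
  unfolding is_GT_def by blast

lemma row_mono_step:
  assumes "is_GT n a" "i \<le> n" "1 \<le> j" "j < i"
  shows "a i j \<le> a i (j+1)"
proof -
  have "a (i - 1 + 1) j \<le> a (i-1) j \<and> a (i-1) j \<le> a (i - 1 + 1) (j+1)"
    using GT_le[OF assms(1), of j "i-1"] assms by simp
  moreover have "i - 1 + 1 = i" using assms by simp
  ultimately show ?thesis by simp
qed

lemma row_mono:
  assumes GT: "is_GT n a" and "i \<le> n" "1 \<le> x" "x \<le> y" "y \<le> i"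
  shows "a i x \<le> a i y"
  using assms(4,5)
proof (induction y rule: dec_induct)
  case base then show ?case by simp
next
  case (step y)
  have "a i y \<le> a i (y+1)" using row_mono_step[OF GT, of i y] step assms by simp
  then show ?case using step by simp
qed

lemma bad_pattern:
  assumes GT: "is_GT n a" and bad: "\<not> no_three_equal_above_bottom n a"
  shows "\<exists>i\<in>{1..n}. AF (Lc a i) (Rc a i) (Tc a i) i + AT (Lc a i) (Rc a i) (Tc a i) i = 0"
proof -
  define Q where "Q i = (i < n \<and> (\<exists>p. 1 \<le> p \<and> p+2 \<le> i \<and> a i p = a i (p+1) \<and> a i (p+1) = a i (p+2)))" for i
  obtain i0 j1 j2 j3 where h0: "i0 < n" "1 \<le> j1" "j1 < j2" "j2 < j3" "j3 \<le> i0"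
      "a i0 j1 = a i0 j2" "a i0 j2 = a i0 j3"
    using bad unfolding no_three_equal_above_bottom_def by blast
  have "Q i0"
  proof -
    have m1: "a i0 j1 \<le> a i0 (j1+1)" "a i0 (j1+1) \<le> a i0 (j1+2)" "a i0 (j1+2) \<le> a i0 j3"
      using row_mono[OF GT, of i0 j1 "j1+1"] row_mono[OF GT, of i0 "j1+1" "j1+2"]
        row_mono[OF GT, of i0 "j1+2" j3] h0 by auto
    then have "a i0 j1 = a i0 (j1+1) \<and> a i0 (j1+1) = a i0 (j1+2)" using h0 by linarith
    then show ?thesis unfolding Q_def using h0 by (intro conjI exI[of _ j1]) auto
  qed
  then obtain i where Qi: "Q i" and minQ: "\<And>i'. i' < i \<Longrightarrow> \<not> Q i'"
    using exists_least_iff[of Q] by blast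
  from Qi obtain p where hp: "i < n" "1 \<le> p" "p+2 \<le> i" "a i p = a i (p+1)" "a i (p+1) = a i (p+2)"
    unfolding Q_def by blast
  have no4: False if q: "1 \<le> q" "q+3 \<le> i" "a i q = a i (q+1)" "a i (q+1) = a i (q+2)" "a i (q+2) = a i (q+3)" for q
  proof -
    have ii: "i - 1 + 1 = i" "i - 1 < n" using q hp by auto
    have g: "a i t \<le> a (i-1) t \<and> a (i-1) t \<le> a i (t+1)" if "1 \<le> t" "t \<le> i - 1" for t
      using GT_le[OF GT, of t "i-1"] that ii by simp
    have le: "1 \<le> q" "q \<le> i - 1" "1 \<le> q + 1" "q + 1 \<le> i - 1" "1 \<le> q + 2" "q + 2 \<le> i - 1" using q by auto
    have g1: "a i q \<le> a (i-1) q \<and> a (i-1) q \<le> a i (q+1)" using g[OF le(1,2)] .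
    have g2: "a i (q+1) \<le> a (i-1) (q+1) \<and> a (i-1) (q+1) \<le> a i (q+1+1)" using g[OF le(3,4)] .
    have g3: "a i (q+2) \<le> a (i-1) (q+2) \<and> a (i-1) (q+2) \<le> a i (q+2+1)" using g[OF le(5,6)] .
    have eqs: "q+1+1 = q+2" "q+2+1 = q+3" by simp_all
    have "a (i-1) q = a i q" "a (i-1) (q+1) = a i q" "a (i-1) (q+2) = a i q"
      using g1 g2 g3 q unfolding eqs by linarith+
    then have "Q (i-1)" unfolding Q_def using q ii by (intro conjI exI[of _ q]) auto
    moreover have "i - 1 < i" using q by simp
    ultimately show False using minQ by blast
  qed
  let ?v = "a i p"
  have e1: "a (i+1) (p+1) = ?v"
    using GT_le[OF GT, of p i] GT_le[OF GT, of "p+1" i] hp by auto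
  have e2: "a (i+1) (p+2) = ?v"
    using GT_le[OF GT, of "p+1" i] GT_le[OF GT, of "p+2" i] hp by (auto simp: add.assoc)
  have "AF (Lc a (i+1)) (Rc a (i+1)) (Tc a (i+1)) (i+1) + AT (Lc a (i+1)) (Rc a (i+1)) (Tc a (i+1)) (i+1) = 0"
  proof (rule bad_row[where p = p])
    show "\<not> Lc a (i+1) 1" by (rule L1_c)
    show "\<And>j. 1 \<le> j \<Longrightarrow> Tc a (i+1) j \<Longrightarrow> Rc a (i+1) j \<and> Lc a (i+1) (Suc j)" by (rule TRL_c)
    show "\<And>j. Tc a (i+1) j \<Longrightarrow> j < i + 1" by (rule Tm_c)
    show "1 \<le> p" by (rule hp)
    show "Lc a (i+1) (Suc p)" unfolding Lc_def using e1 hp by simp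
    show "Tc a (i+1) (Suc p)" unfolding Tc_def using e1 e2 hp by (simp add: numeral_2_eq_2)
    show "Rc a (i+1) (p+2)" unfolding Rc_def using e2 hp by simp
    show "\<not> Lc a (i+1) p" if "Tc a (i+1) p"
    proof
      assume "Lc a (i+1) p"
      then have "2 \<le> p" "a (i+1) p = a i (p-1)" unfolding Lc_def by auto
      moreover have "a (i+1) p = a i p" using that unfolding Tc_def by simp
      moreover have pp: "1 \<le> p - 1" "p - 1 + 3 \<le> i" "p - 1 + 1 = p" "p - 1 + 2 = p + 1" "p - 1 + 3 = p + 2"
        using \<open>2 \<le> p\<close> hp by auto
      ultimately show False using no4[of "p-1"] hp unfolding pp by simp
    qed
    show "\<not> Rc a (i+1) (p+3)" if "Tc a (i+1) (p+2)"
    proof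
      assume "Rc a (i+1) (p+3)"
      then have "p + 3 < i + 1" "a (i+1) (p+3) = a i (p+3)" unfolding Rc_def by auto
      moreover have "a (i+1) (p+3) = ?v" using that e2 unfolding Tc_def by (simp add: numeral_3_eq_3 numeral_2_eq_2)
      ultimately show False using no4[of p] hp by (simp add: numeral_2_eq_2 numeral_3_eq_3)
    qed
  qed
  moreover have "i + 1 \<in> {1..n}" using hp by auto
  ultimately show ?thesis by blast
qed


lemma k_mono:
  fixes k :: "nat \<Rightarrow> int"
  assumes k: "\<And>j. 1 \<le> j \<Longrightarrow> j < n \<Longrightarrow> k j \<le> k (j+1)" and "1 \<le> x" "x \<le> y" "y \<le> n"
  shows "(k x :: int) \<le> k y"
  using assms(3,4)
proof (induction y rule: dec_induct)
  case base then show ?case by simp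
next
  case (step y)
  then show ?case using k[of y] assms(2) by simp
qed

lemma GT_lower:
  assumes GT: "is_GT n a" and "i \<le> n" "1 \<le> j"
  shows "j \<le> i \<Longrightarrow> a n j \<le> a i j"
  using assms(2)
proof (induction i rule: inc_induct)
  case base then show ?case by simp
next
  case (step i')
  have "a (i'+1) j \<le> a i' j" using GT_le[OF GT, of j i'] step assms by simp
  then show ?case using step by simp
qed

lemma GT_upper:
  assumes GT: "is_GT n a" and "i \<le> n"
  shows "\<forall>j. 1 \<le> j \<and> j \<le> i \<longrightarrow> a i j \<le> a n (j + (n - i))"
  using assms(2)
proof (induction i rule: inc_induct)
  case base then show ?case by simp
next
  case (step i')
  show ?case
  proof (intro allI impI)
    fix j assume j: "1 \<le> j \<and> j \<le> i'"
    have "a i' j \<le> a (i'+1) (j+1)" using GT_le[OF GT, of j i'] step j by simp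
    also have "\<dots> \<le> a n (j + 1 + (n - Suc i'))" using step.IH[rule_format, of "j+1"] j by simp
    also have "j + 1 + (n - Suc i') = j + (n - i')" using step by simp
    finally show "a i' j \<le> a n (j + (n - i'))" .
  qed
qed

lemma GT_bounds:
  fixes k :: "nat \<Rightarrow> int"
  assumes GT: "is_GT n a" and bot: "bottom_row n k a"
    and k: "\<And>j. 1 \<le> j \<Longrightarrow> j < n \<Longrightarrow> k j \<le> k (j+1)" and t: "in_tri n i j"
  shows "a i j \<in> {k 1..k n}"
proof -
  have h: "1 \<le> j" "j \<le> i" "i \<le> n" using t unfolding in_tri_def by auto
  have "k 1 \<le> k j" using k_mono[where k=k and n=n, OF k, of 1 j] h by simp
  also have "k j = a n j" using bot h unfolding bottom_row_def by simp
  also have "\<dots> \<le> a i j" using GT_lower[OF GT h(3,1,2)] .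
  finally have lo: "k 1 \<le> a i j" .
  have "a i j \<le> a n (j + (n - i))" using GT_upper[OF GT h(3)] h by blast
  also have "\<dots> = k (j + (n - i))"
  proof -
    have jj: "1 \<le> j + (n - i) \<and> j + (n - i) \<le> n" using h by auto
    then show ?thesis using bot unfolding bottom_row_def by blast
  qed
  also have "\<dots> \<le> k n" using k_mono[where k=k and n=n, OF k, of "j + (n - i)" n] h by simp
  finally show ?thesis using lo by simp
qed

lemma finite_GTset:
  fixes k :: "nat \<Rightarrow> int"
  assumes k: "\<And>j. 1 \<le> j \<Longrightarrow> j < n \<Longrightarrow> k j \<le> k (j+1)"
  shows "finite {a. is_GT n a \<and> bottom_row n k a}"
proof -
  let ?C = "{c. in_tri n (fst c) (snd c)}"
  have fC: "finite ?C"
    by (rule finite_subset[of _ "{0..n} \<times> {0..n}"]) (auto simp: in_tri_def)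
  let ?F = "{F. \<forall>c. (c \<in> ?C \<longrightarrow> F c \<in> {k 1..k n}) \<and> (c \<notin> ?C \<longrightarrow> F c = (0::int))}"
  have fF: "finite ?F" by (rule finite_set_of_finite_funs[OF fC]) simp
  have "{a. is_GT n a \<and> bottom_row n k a} \<subseteq> (\<lambda>F i j. F (i,j)) ` ?F"
  proof
    fix a assume a: "a \<in> {a. is_GT n a \<and> bottom_row n k a}"
    then have GT: "is_GT n a" and bot: "bottom_row n k a" by auto
    have "(\<lambda>c. a (fst c) (snd c)) \<in> ?F"
    proof (rule CollectI, intro allI conjI impI)
      fix c :: "nat \<times> nat"
      assume "c \<in> ?C"
      then show "a (fst c) (snd c) \<in> {k 1..k n}" using GT_bounds[OF GT bot k, of "fst c" "snd c"] by simp
    next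
      fix c :: "nat \<times> nat"
      assume "c \<notin> ?C"
      then show "a (fst c) (snd c) = 0" using GT unfolding is_GT_def by simp
    qed
    then show "a \<in> (\<lambda>F i j. F (i,j)) ` ?F"
      by (intro image_eqI[where x="\<lambda>c. a (fst c) (snd c)"]) simp_all
  qed
  then show ?thesis using fF finite_subset by blast
qed

lemma pattern_value:
  assumes GT: "is_GT n a"
  shows "(\<Sum>d\<in>{d. is_arrowed_GT n a d}. (-1::int) ^ (card (special_triangles n a d) + card (double_arrows n d)))
       = (if no_three_equal_above_bottom n a then 2 ^ card (r_entries n a) else 0)"
proof (cases "no_three_equal_above_bottom n a")
  case True
  then show ?thesis using pattern_sum[OF GT] good_pattern[OF GT True] by simp
next
  case False
  then obtain i where "i \<in> {1..n}" "AF (Lc a i) (Rc a i) (Tc a i) i + AT (Lc a i) (Rc a i) (Tc a i) i = 0"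
    using bad_pattern[OF GT] by blast
  then have "(\<Prod>i\<in>{1..n}. AF (Lc a i) (Rc a i) (Tc a i) i + AT (Lc a i) (Rc a i) (Tc a i) i) = 0"
    by (subst prod_zero_iff) auto
  then show ?thesis using pattern_sum[OF GT] False by simp
qed

lemma arrowed_GT: "is_arrowed_GT n a d \<Longrightarrow> is_GT n a"
  unfolding is_arrowed_GT_def by blast

theorem proposition2p1:
  fixes n :: nat and k :: "nat \<Rightarrow> int"
  assumes "n \<ge> 1"
    and "\<And>j. 1 \<le> j \<Longrightarrow> j < n \<Longrightarrow> k j \<le> k (j+1)"
  shows "(\<Sum>(a,d) \<in> {(a,d). is_arrowed_GT n a d \<and> bottom_row n k a}.
            (-1::int) ^ (card (special_triangles n a d) + card (double_arrows n d)))
       = (\<Sum>a \<in> {a. is_GT n a \<and> bottom_row n k a \<and> no_three_equal_above_bottom n a}.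
            (2::int) ^ card (r_entries n a))"
proof -
  let ?G = "{a. is_GT n a \<and> bottom_row n k a}"
  have fG: "finite ?G" by (rule finite_GTset[where k=k and n=n, OF assms(2)])
  have fD: "finite {d. is_arrowed_GT n a d}" for a
    by (rule finite_subset[OF _ finite_AllD[of n]]) (auto simp: AllD_def is_arrowed_GT_def)
  have S: "{(a,d). is_arrowed_GT n a d \<and> bottom_row n k a} = (SIGMA a:?G. {d. is_arrowed_GT n a d})"
    using arrowed_GT by auto
  have "(\<Sum>(a,d) \<in> {(a,d). is_arrowed_GT n a d \<and> bottom_row n k a}.
            (-1::int) ^ (card (special_triangles n a d) + card (double_arrows n d)))
      = (\<Sum>a\<in>?G. \<Sum>d\<in>{d. is_arrowed_GT n a d}. (-1::int) ^ (card (special_triangles n a d) + card (double_arrows n d)))"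
    unfolding S by (rule sum.Sigma[symmetric]) (use fG fD in auto)
  also have "\<dots> = (\<Sum>a\<in>?G. if no_three_equal_above_bottom n a then (2::int) ^ card (r_entries n a) else 0)"
    by (rule sum.cong[OF refl]) (simp add: pattern_value)
  also have "\<dots> = (\<Sum>a\<in>{a\<in>?G. no_three_equal_above_bottom n a}. (2::int) ^ card (r_entries n a))"
    by (rule sum.inter_filter[OF fG, symmetric])
  also have "{a\<in>?G. no_three_equal_above_bottom n a} = {a. is_GT n a \<and> bottom_row n k a \<and> no_three_equal_above_bottom n a}"
    by auto
  finally show ?thesis .
qed

end
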